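(* There exists $\varepsilon_0>0$ such that for every $\varepsilon\in(0,\varepsilon_0)$ the following holds. Let $\mathbf{U}$ be the $7\times 7$ matrix $$\mathbf{U}=\begin{pmatrix} 0 & -1 & \varepsilon & -10 & -\tfrac13+\varepsilon & -\tfrac13+\varepsilon & -\tfrac13+\varepsilon\\ \varepsilon & 0 & -1 & -10 & -\tfrac13+\varepsilon & -\tfrac13+\varepsilon & -\tfrac13+\varepsilon\\ -1 & \varepsilon & 0 & -10 & -\tfrac13+\varepsilon & -\tfrac13+\varepsilon & -\tfrac13+\varepsilon\\ -2 & -2 & 2 & 0 & -\tfrac13 & -\tfrac13 & -\tfrac13\\ -\tfrac13 & -\tfrac13 & -\tfrac13 & 10 & 0 & -1 & \varepsilon\\ -\tfrac13 & -\tfrac13 & -\tfrac13 & 10 & \varepsilon & 0 & -1\\ -\tfrac13 & -\tfrac13 & -\tfrac13 & 10 & -1 & \varepsilon & 0 \end{pmatrix}.$$ Then the set $\Gamma_{567}=\{\mathbf{x}\in S_7: x_5+x_6+x_7=1 \text{ and } x_5x_6x_7=0\}$ is asymptotically stable for the replicator dynamics $\dot x_i=x_i[(\mathbf{U}\mathbf{x})_i-\mathbf{x}\cdot\mathbf{U}\mathbf{x}]$, $i=1,\dots,7$, on $S_7$.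
   Context: $S_7=\{\mathbf{x}\in\mathbb{R}_+^7:\sum_i x_i=1\}$, which is invariant under the replicator dynamics. A compact invariant set is asymptotically stable if it is Lyapunov stable (every neighborhood contains a neighborhood whose forward orbits stay in the first) and attracting (all solutions starting in some neighborhood converge to it). The paper assumes throughout that $\varepsilon>0$ is "small enough". *)

theory Defs
  imports "HOL-Analysis.Analysis"
begin

text \<open>States are vectors in real^7; the coordinate i of type 7 corresponds to the
paper's index pidx i in {1..7}.\<close>

definition pidx :: "7 \<Rightarrow> nat" where
  "pidx i = nat (Rep_bit1 i) + 1"

definition Uentry :: "real \<Rightarrow> nat \<Rightarrow> nat \<Rightarrow> real" where
  "Uentry e k l =
    [[0, -1, e, -10, -1/3+e, -1/3+e, -1/3+e],
     [e, 0, -1, -10, -1/3+e, -1/3+e, -1/3+e],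
     [-1, e, 0, -10, -1/3+e, -1/3+e, -1/3+e],
     [-2, -2, 2, 0, -1/3, -1/3, -1/3],
     [-1/3, -1/3, -1/3, 10, 0, -1, e],
     [-1/3, -1/3, -1/3, 10, e, 0, -1],
     [-1/3, -1/3, -1/3, 10, -1, e, 0]] ! (k - 1) ! (l - 1)"

definition Umat :: "real \<Rightarrow> real^7^7" where
  "Umat e = (\<chi> i j. Uentry e (pidx i) (pidx j))"

definition coord :: "real^7 \<Rightarrow> nat \<Rightarrow> real" where
  "coord x k = x $ (THE i. pidx i = k)"

definition simplex7 :: "(real^7) set" where
  "simplex7 = {x. (\<forall>i. 0 \<le> x $ i) \<and> (\<Sum>i\<in>UNIV. x $ i) = 1}"

definition Gamma567 :: "(real^7) set" where
  "Gamma567 = {x \<in> simplex7. coord x 5 + coord x 6 + coord x 7 = 1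
                             \<and> coord x 5 * coord x 6 * coord x 7 = 0}"

definition replicator :: "real^7^7 \<Rightarrow> real^7 \<Rightarrow> real^7" where
  "replicator U x = (\<chi> i. x $ i * ((U *v x) $ i - x \<bullet> (U *v x)))"

definition is_solution :: "('a::real_normed_vector \<Rightarrow> 'a) \<Rightarrow> (real \<Rightarrow> 'a) \<Rightarrow> bool" where
  "is_solution F x \<longleftrightarrow>
     (\<forall>t\<ge>0. (x has_vector_derivative F (x t)) (at t within {0..}))"

definition asymptotically_stable ::
  "('a::real_normed_vector \<Rightarrow> 'a) \<Rightarrow> 'a set \<Rightarrow> 'a set \<Rightarrow> bool" where
  "asymptotically_stable F S G \<longleftrightarrow>
     compact G \<and> G \<subseteq> S \<and>
     (\<forall>x. is_solution F x \<and> x 0 \<in> G \<longrightarrow> (\<forall>t\<ge>0. x t \<in> G)) \<and>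
     (\<forall>V. open V \<and> G \<subseteq> V \<longrightarrow>
        (\<exists>W. open W \<and> G \<subseteq> W \<and>
           (\<forall>x. is_solution F x \<and> x 0 \<in> W \<inter> S \<longrightarrow> (\<forall>t\<ge>0. x t \<in> V)))) \<and>
     (\<exists>W. open W \<and> G \<subseteq> W \<and>
        (\<forall>x. is_solution F x \<and> x 0 \<in> W \<inter> S \<longrightarrow>
           ((\<lambda>t. infdist (x t) G) \<longlongrightarrow> 0) at_top))"

end

theory Submission imports Defs "HOL-Real_Asymp.Real_Asymp" begin

lemma pidx_vals: "pidx (0::7) = 1" "pidx (1::7) = 2" "pidx (2::7) = 3" "pidx (3::7) = 4"
  "pidx (4::7) = 5" "pidx (5::7) = 6" "pidx (6::7) = 7"
  by (simp_all add: pidx_def bit1.Rep_numeral bit1.Rep_0 bit1.Rep_1)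

lemma U7: "(UNIV::7 set) = {0,1,2,3,4,5,6}"
proof -
  have "x \<in> {0,1,2,3,4,5,6}" for x :: 7
  proof (induct x rule: bit1_induct)
    case (of_int z)
    then have "z = 0 \<or> z = 1 \<or> z = 2 \<or> z = 3 \<or> z = 4 \<or> z = 5 \<or> z = 6" by auto
    then have "of_int z = (0::7) \<or> of_int z = (1::7) \<or> of_int z = (2::7) \<or> of_int z = (3::7) \<or> of_int z = (4::7) \<or> of_int z = (5::7) \<or> of_int z = (6::7)" by (elim disjE) simp_all
    then show ?case by (elim disjE) (simp_all only: insert_iff simp_thms)
  qed
  then show ?thesis by blast
qed

lemma sum7: "(\<Sum>i\<in>UNIV. f i) = f (0::7) + f 1 + f 2 + f 3 + f 4 + f 5 + f 6"
  unfolding U7 by (simp add: sum.insert_if add.assoc)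

lemma all7: "(\<forall>i::7. P i) \<longleftrightarrow> P 0 \<and> P 1 \<and> P 2 \<and> P 3 \<and> P 4 \<and> P 5 \<and> P 6"
  using U7 by (metis UNIV_I insertE empty_iff)

lemma pidx_inj: "pidx i = pidx j \<Longrightarrow> i = j"
proof -
  have "i \<in> {0,1,2,3,4,5,6}" "j \<in> {0,1,2,3,4,5,6}" using U7 by auto
  then show "pidx i = pidx j \<Longrightarrow> i = j" by (auto simp: pidx_vals)
qed

lemma coord_vals: "coord z 5 = z $ 4" "coord z 6 = z $ 5" "coord z 7 = z $ 6"
proof -
  have "(THE i. pidx i = 5) = 4" by (rule the_equality) (auto simp: pidx_vals intro: pidx_inj)
  moreover have "(THE i. pidx i = 6) = 5" by (rule the_equality) (auto simp: pidx_vals intro: pidx_inj)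
  moreover have "(THE i. pidx i = 7) = 6" by (rule the_equality) (auto simp: pidx_vals intro: pidx_inj)
  ultimately show "coord z 5 = z $ 4" "coord z 6 = z $ 5" "coord z 7 = z $ 6"
    by (simp_all add: coord_def)
qed

lemma e2_bound:
  fixes p q r :: real
  assumes "p \<ge> 0" "q \<ge> 0" "r \<ge> 0" "p + q + r \<le> 1" "p*q*r < 1/1000000"
  shows "p*q + q*r + r*p \<le> 1/4 + 1/100"
proof -
  have m: "p < 1/100 \<or> q < 1/100 \<or> r < 1/100"
  proof (rule ccontr)
    assume "\<not> ?thesis"
    then have "p \<ge> 1/100" "q \<ge> 1/100" "r \<ge> 1/100" by auto
    then have pq: "(1/100)*(1/100) \<le> p*q" by (intro mult_mono) auto
    have "(1/100)*(1/100)*(1/100) \<le> p*q*r"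
      using mult_mono[OF pq \<open>r \<ge> 1/100\<close>] assms by simp
    then show False using assms(5) by simp
  qed
  have sq: "m1*m2 \<le> 1/4" if "m1 \<ge> 0" "m2 \<ge> 0" "m1 + m2 \<le> 1" for m1 m2 :: real
  proof -
    have "(m1+m2)^2 = m1^2 + 2*m1*m2 + m2^2" by (simp add: power2_sum)
    moreover have "(m1-m2)^2 = m1^2 - 2*m1*m2 + m2^2" by (simp add: power2_diff)
    moreover have "0 \<le> (m1-m2)^2" by simp
    ultimately have "4*(m1*m2) \<le> (m1+m2)^2" by linarith
    also have "(m1+m2)^2 \<le> 1" using that by (simp add: power_le_one)
    finally show ?thesis by simp
  qed
  show ?thesis using m
  proof (elim disjE)
    assume "p < 1/100"
    have "q*r \<le> 1/4" using sq[of q r] assms by simp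
    moreover have "p*(q+r) \<le> p" using assms by (intro mult_left_le) auto
    ultimately show ?thesis using \<open>p < 1/100\<close> by (simp add: algebra_simps)
  next
    assume "q < 1/100"
    have "p*r \<le> 1/4" using sq[of p r] assms by simp
    moreover have "q*(p+r) \<le> q" using assms by (intro mult_left_le) auto
    ultimately show ?thesis using \<open>q < 1/100\<close> by (simp add: algebra_simps)
  next
    assume "r < 1/100"
    have "p*q \<le> 1/4" using sq[of p q] assms by simp
    moreover have "r*(p+q) \<le> r" using assms by (intro mult_left_le) auto
    ultimately show ?thesis using \<open>r < 1/100\<close> by (simp add: algebra_simps)
  qed
qed
definition ur1 :: "real \<Rightarrow> real \<Rightarrow> real \<Rightarrow> real \<Rightarrow> real \<Rightarrow> real \<Rightarrow> real \<Rightarrow> real \<Rightarrow> real" where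
  "ur1 e x1 x2 x3 x4 x5 x6 x7 = (0)*x1 + (-1)*x2 + ((0)+e)*x3 + (-10)*x4 + ((-1/3)+e)*x5 + ((-1/3)+e)*x6 + ((-1/3)+e)*x7"

definition ur2 :: "real \<Rightarrow> real \<Rightarrow> real \<Rightarrow> real \<Rightarrow> real \<Rightarrow> real \<Rightarrow> real \<Rightarrow> real \<Rightarrow> real" where
  "ur2 e x1 x2 x3 x4 x5 x6 x7 = ((0)+e)*x1 + (0)*x2 + (-1)*x3 + (-10)*x4 + ((-1/3)+e)*x5 + ((-1/3)+e)*x6 + ((-1/3)+e)*x7"

definition ur3 :: "real \<Rightarrow> real \<Rightarrow> real \<Rightarrow> real \<Rightarrow> real \<Rightarrow> real \<Rightarrow> real \<Rightarrow> real \<Rightarrow> real" where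
  "ur3 e x1 x2 x3 x4 x5 x6 x7 = (-1)*x1 + ((0)+e)*x2 + (0)*x3 + (-10)*x4 + ((-1/3)+e)*x5 + ((-1/3)+e)*x6 + ((-1/3)+e)*x7"

definition ur4 :: "real \<Rightarrow> real \<Rightarrow> real \<Rightarrow> real \<Rightarrow> real \<Rightarrow> real \<Rightarrow> real \<Rightarrow> real \<Rightarrow> real" where
  "ur4 e x1 x2 x3 x4 x5 x6 x7 = (-2)*x1 + (-2)*x2 + (2)*x3 + (0)*x4 + (-1/3)*x5 + (-1/3)*x6 + (-1/3)*x7"

definition ur5 :: "real \<Rightarrow> real \<Rightarrow> real \<Rightarrow> real \<Rightarrow> real \<Rightarrow> real \<Rightarrow> real \<Rightarrow> real \<Rightarrow> real" where
  "ur5 e x1 x2 x3 x4 x5 x6 x7 = (-1/3)*x1 + (-1/3)*x2 + (-1/3)*x3 + (10)*x4 + (0)*x5 + (-1)*x6 + ((0)+e)*x7"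

definition ur6 :: "real \<Rightarrow> real \<Rightarrow> real \<Rightarrow> real \<Rightarrow> real \<Rightarrow> real \<Rightarrow> real \<Rightarrow> real \<Rightarrow> real" where
  "ur6 e x1 x2 x3 x4 x5 x6 x7 = (-1/3)*x1 + (-1/3)*x2 + (-1/3)*x3 + (10)*x4 + ((0)+e)*x5 + (0)*x6 + (-1)*x7"

definition ur7 :: "real \<Rightarrow> real \<Rightarrow> real \<Rightarrow> real \<Rightarrow> real \<Rightarrow> real \<Rightarrow> real \<Rightarrow> real \<Rightarrow> real" where
  "ur7 e x1 x2 x3 x4 x5 x6 x7 = (-1/3)*x1 + (-1/3)*x2 + (-1/3)*x3 + (10)*x4 + (-1)*x5 + ((0)+e)*x6 + (0)*x7"

definition WW :: "real \<Rightarrow> real \<Rightarrow> real \<Rightarrow> real \<Rightarrow> real \<Rightarrow> real \<Rightarrow> real \<Rightarrow> real \<Rightarrow> real" where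
  "WW e x1 x2 x3 x4 x5 x6 x7 = x1*ur1 e x1 x2 x3 x4 x5 x6 x7 + x2*ur2 e x1 x2 x3 x4 x5 x6 x7 + x3*ur3 e x1 x2 x3 x4 x5 x6 x7 + x4*ur4 e x1 x2 x3 x4 x5 x6 x7 + x5*ur5 e x1 x2 x3 x4 x5 x6 x7 + x6*ur6 e x1 x2 x3 x4 x5 x6 x7 + x7*ur7 e x1 x2 x3 x4 x5 x6 x7"

lemma WW_low:
  assumes "e \<ge> 0" "x1 \<ge> 0" "x2 \<ge> 0" "x3 \<ge> 0" "x4 \<ge> 0" "x5 \<ge> 0" "x6 \<ge> 0" "x7 \<ge> 0"
  shows "WW e x1 x2 x3 x4 x5 x6 x7 \<ge> (e-1)*(x5*x6+x6*x7+x7*x5) - 10*((x1+x2+x3+x4+x5+x6+x7)^2 - (x5+x6+x7)^2)"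
proof -
  have eq: "WW e x1 x2 x3 x4 x5 x6 x7 - ((e-1)*(x5*x6+x6*x7+x7*x5) - 10*((x1+x2+x3+x4+x5+x6+x7)^2 - (x5+x6+x7)^2)) = (10)*(x1*x1) + (9)*(x1*x2) + ((10)+e)*(x1*x3) + (0)*(x1*x4) + ((29/3)+e)*(x1*x5) + ((29/3)+e)*(x1*x6) + ((29/3)+e)*(x1*x7) + ((10)+e)*(x2*x1) + (10)*(x2*x2) + (9)*(x2*x3) + (0)*(x2*x4) + ((29/3)+e)*(x2*x5) + ((29/3)+e)*(x2*x6) + ((29/3)+e)*(x2*x7) + (9)*(x3*x1) + ((10)+e)*(x3*x2) + (10)*(x3*x3) + (0)*(x3*x4) + ((29/3)+e)*(x3*x5) + ((29/3)+e)*(x3*x6) + ((29/3)+e)*(x3*x7) + (8)*(x4*x1) + (8)*(x4*x2) + (12)*(x4*x3) + (10)*(x4*x4) + (29/3)*(x4*x5) + (29/3)*(x4*x6) + (29/3)*(x4*x7) + (29/3)*(x5*x1) + (29/3)*(x5*x2) + (29/3)*(x5*x3) + (20)*(x5*x4) + (29/3)*(x6*x1) + (29/3)*(x6*x2) + (29/3)*(x6*x3) + (20)*(x6*x4) + (29/3)*(x7*x1) + (29/3)*(x7*x2) + (29/3)*(x7*x3) + (20)*(x7*x4)"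
    unfolding WW_def ur1_def ur2_def ur3_def ur4_def ur5_def ur6_def ur7_def by (simp add: power2_eq_square algebra_simps)
  have "0 \<le> (10)*(x1*x1) + (9)*(x1*x2) + ((10)+e)*(x1*x3) + (0)*(x1*x4) + ((29/3)+e)*(x1*x5) + ((29/3)+e)*(x1*x6) + ((29/3)+e)*(x1*x7) + ((10)+e)*(x2*x1) + (10)*(x2*x2) + (9)*(x2*x3) + (0)*(x2*x4) + ((29/3)+e)*(x2*x5) + ((29/3)+e)*(x2*x6) + ((29/3)+e)*(x2*x7) + (9)*(x3*x1) + ((10)+e)*(x3*x2) + (10)*(x3*x3) + (0)*(x3*x4) + ((29/3)+e)*(x3*x5) + ((29/3)+e)*(x3*x6) + ((29/3)+e)*(x3*x7) + (8)*(x4*x1) + (8)*(x4*x2) + (12)*(x4*x3) + (10)*(x4*x4) + (29/3)*(x4*x5) + (29/3)*(x4*x6) + (29/3)*(x4*x7) + (29/3)*(x5*x1) + (29/3)*(x5*x2) + (29/3)*(x5*x3) + (20)*(x5*x4) + (29/3)*(x6*x1) + (29/3)*(x6*x2) + (29/3)*(x6*x3) + (20)*(x6*x4) + (29/3)*(x7*x1) + (29/3)*(x7*x2) + (29/3)*(x7*x3) + (20)*(x7*x4)" using assms by (intro add_nonneg_nonneg mult_nonneg_nonneg) auto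
  then show ?thesis using eq by linarith
qed

lemma key:
  assumes e: "0 < e" "e < 1/100"
    and nn: "x1 \<ge> 0" "x2 \<ge> 0" "x3 \<ge> 0" "x4 \<ge> 0" "x5 \<ge> 0" "x6 \<ge> 0" "x7 \<ge> 0"
    and s1: "x1+x2+x3+x4+x5+x6+x7 = 1"
    and L: "x1+x2+x3+x4 + x5*x6*x7 < 1/1000000"
  shows "ur1 e x1 x2 x3 x4 x5 x6 x7 - WW e x1 x2 x3 x4 x5 x6 x7 \<le> -1/40"
    and "ur2 e x1 x2 x3 x4 x5 x6 x7 - WW e x1 x2 x3 x4 x5 x6 x7 \<le> -1/40"
    and "ur3 e x1 x2 x3 x4 x5 x6 x7 - WW e x1 x2 x3 x4 x5 x6 x7 \<le> -1/40"
    and "ur4 e x1 x2 x3 x4 x5 x6 x7 - WW e x1 x2 x3 x4 x5 x6 x7 \<le> -1/40"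
    and "ur5 e x1 x2 x3 x4 x5 x6 x7 + ur6 e x1 x2 x3 x4 x5 x6 x7 + ur7 e x1 x2 x3 x4 x5 x6 x7
           - 3 * WW e x1 x2 x3 x4 x5 x6 x7 \<le> -1/40"
proof -
  define y where "y = x1+x2+x3+x4"
  define sm where "sm = x5+x6+x7"
  have P0: "x5*x6*x7 \<ge> 0" using nn by simp
  have y0: "y \<ge> 0" "y < 1/1000000" using nn L P0 unfolding y_def by linarith+
  have sy: "sm = 1 - y" using s1 unfolding y_def sm_def by linarith
  have P: "x5*x6*x7 < 1/1000000" using L nn by linarith
  have e2: "x5*x6+x6*x7+x7*x5 \<le> 1/4 + 1/100"
    using e2_bound[OF nn(5-7) _ P] sy y0 unfolding sm_def by linarith
  have e2n: "x5*x6+x6*x7+x7*x5 \<ge> 0" using nn by simp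
  have W1: "WW e x1 x2 x3 x4 x5 x6 x7 \<ge> (e-1)*(x5*x6+x6*x7+x7*x5) - 10*((x1+x2+x3+x4+x5+x6+x7)^2 - (x5+x6+x7)^2)"
    using WW_low[of e x1 x2 x3 x4 x5 x6 x7] e nn by simp
  have sq: "(x1+x2+x3+x4+x5+x6+x7)^2 - (x5+x6+x7)^2 = y*(2-y)"
  proof -
    have "(x1+x2+x3+x4+x5+x6+x7)^2 - (x5+x6+x7)^2 = 1 - (1-y)^2" using s1 sy unfolding sm_def by simp
    also have "\<dots> = y*(2-y)" by (simp add: power2_eq_square algebra_simps)
    finally show ?thesis .
  qed
  have "y*(2-y) \<le> 2*y" using y0 by (simp add: algebra_simps)
  have ee2: "e*(x5*x6+x6*x7+x7*x5) \<ge> 0" using e e2n by simp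
  have W: "WW e x1 x2 x3 x4 x5 x6 x7 \<ge> -(x5*x6+x6*x7+x7*x5) - 20*y"
  proof -
    have "(e-1)*(x5*x6+x6*x7+x7*x5) = e*(x5*x6+x6*x7+x7*x5) - (x5*x6+x6*x7+x7*x5)" by (simp add: algebra_simps)
    moreover have aux: "\<And>a q w E e' (yy::real). a - 10*q \<le> w \<Longrightarrow> q \<le> 2*yy \<Longrightarrow> a = e' - E \<Longrightarrow> 0 \<le> e' \<Longrightarrow> -E - 20*yy \<le> w"
      by linarith
    moreover have "(x1+x2+x3+x4+x5+x6+x7)^2 - (x5+x6+x7)^2 \<le> 2*y" using sq \<open>y*(2-y) \<le> 2*y\<close> by simp
    ultimately show ?thesis using W1 ee2 by blast
  qed
  have ey: "e*y \<ge> 0" "e*x1 \<le> e*y" "e*x2 \<le> e*y" "e*x3 \<le> e*y" "e*x1 \<ge> 0" "e*x2 \<ge> 0" "e*x3 \<ge> 0" "e*x4 \<ge> 0"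
    using e nn y0 unfolding y_def by (auto intro!: mult_left_mono)
  have es: "e * sm = e - e*y" unfolding sy by (simp add: algebra_simps)
  have u1: "ur1 e x1 x2 x3 x4 x5 x6 x7 = -x2 + e*x3 - 10*x4 - sm/3 + e * sm"
    unfolding ur1_def sm_def by (simp add: algebra_simps)
  have u2: "ur2 e x1 x2 x3 x4 x5 x6 x7 = e*x1 - x3 - 10*x4 - sm/3 + e * sm"
    unfolding ur2_def sm_def by (simp add: algebra_simps)
  have u3: "ur3 e x1 x2 x3 x4 x5 x6 x7 = -x1 + e*x2 - 10*x4 - sm/3 + e * sm"
    unfolding ur3_def sm_def by (simp add: algebra_simps)
  have u4: "ur4 e x1 x2 x3 x4 x5 x6 x7 = -2*x1 - 2*x2 + 2*x3 - sm/3"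
    unfolding ur4_def sm_def by (simp add: algebra_simps)
  have u567: "ur5 e x1 x2 x3 x4 x5 x6 x7 + ur6 e x1 x2 x3 x4 x5 x6 x7 + ur7 e x1 x2 x3 x4 x5 x6 x7
      = -(x1+x2+x3) + 30*x4 + e * sm - sm"
    unfolding ur5_def ur6_def ur7_def sm_def by (simp add: algebra_simps)
  show "ur1 e x1 x2 x3 x4 x5 x6 x7 - WW e x1 x2 x3 x4 x5 x6 x7 \<le> -1/40"
    using u1 W e2 ey es sy y0 nn e y_def by linarith
  show "ur2 e x1 x2 x3 x4 x5 x6 x7 - WW e x1 x2 x3 x4 x5 x6 x7 \<le> -1/40"
    using u2 W e2 ey es sy y0 nn e y_def by linarith
  show "ur3 e x1 x2 x3 x4 x5 x6 x7 - WW e x1 x2 x3 x4 x5 x6 x7 \<le> -1/40"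
    using u3 W e2 ey es sy y0 nn e y_def by linarith
  show "ur4 e x1 x2 x3 x4 x5 x6 x7 - WW e x1 x2 x3 x4 x5 x6 x7 \<le> -1/40"
    using u4 W e2 ey es sy y0 nn e y_def by linarith
  show "ur5 e x1 x2 x3 x4 x5 x6 x7 + ur6 e x1 x2 x3 x4 x5 x6 x7 + ur7 e x1 x2 x3 x4 x5 x6 x7
           - 3 * WW e x1 x2 x3 x4 x5 x6 x7 \<le> -1/40"
    using u567 W e2 ey es sy y0 nn e y_def by linarith
qed


lemma mv_vals:
  "(Umat e *v z) $ 0 = ur1 e (z$0) (z$1) (z$2) (z$3) (z$4) (z$5) (z$6)"
  "(Umat e *v z) $ 1 = ur2 e (z$0) (z$1) (z$2) (z$3) (z$4) (z$5) (z$6)"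
  "(Umat e *v z) $ 2 = ur3 e (z$0) (z$1) (z$2) (z$3) (z$4) (z$5) (z$6)"
  "(Umat e *v z) $ 3 = ur4 e (z$0) (z$1) (z$2) (z$3) (z$4) (z$5) (z$6)"
  "(Umat e *v z) $ 4 = ur5 e (z$0) (z$1) (z$2) (z$3) (z$4) (z$5) (z$6)"
  "(Umat e *v z) $ 5 = ur6 e (z$0) (z$1) (z$2) (z$3) (z$4) (z$5) (z$6)"
  "(Umat e *v z) $ 6 = ur7 e (z$0) (z$1) (z$2) (z$3) (z$4) (z$5) (z$6)"
  by (simp_all add: matrix_vector_mult_def Umat_def sum7 pidx_vals Uentry_def
      ur1_def ur2_def ur3_def ur4_def ur5_def ur6_def ur7_def algebra_simps)

lemma inner_val:
  "z \<bullet> (Umat e *v z) = WW e (z$0) (z$1) (z$2) (z$3) (z$4) (z$5) (z$6)"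
  unfolding inner_vec_def sum7 mv_vals WW_def by simp


definition Lf :: "real^7 \<Rightarrow> real" where
  "Lf z = z$0 + z$1 + z$2 + z$3 + z$4 * z$5 * z$6"

definition gg :: "real \<Rightarrow> real^7 \<Rightarrow> 7 \<Rightarrow> real" where
  "gg e z k = (Umat e *v z) $ k - z \<bullet> (Umat e *v z)"

lemma simplex_iff: "z \<in> simplex7 \<longleftrightarrow> (\<forall>i. 0 \<le> z$i) \<and> z$0+z$1+z$2+z$3+z$4+z$5+z$6 = 1"
  by (simp add: simplex7_def sum7)

lemma keyv:
  assumes e: "0 < e" "e < 1/100" and z: "z \<in> simplex7" and L: "Lf z < 1/1000000"
  shows "gg e z 0 \<le> -1/40" "gg e z 1 \<le> -1/40" "gg e z 2 \<le> -1/40" "gg e z 3 \<le> -1/40"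
    "gg e z 4 + gg e z 5 + gg e z 6 \<le> -1/40"
proof -
  have nn: "\<forall>i. 0 \<le> z$i" and s: "z$0+z$1+z$2+z$3+z$4+z$5+z$6 = 1" using z by (auto simp: simplex_iff)
  have L': "z$0+z$1+z$2+z$3 + z$4*z$5*z$6 < 1/1000000" using L by (simp add: Lf_def)
  note k = key[OF e nn[rule_format] nn[rule_format] nn[rule_format] nn[rule_format] nn[rule_format] nn[rule_format] nn[rule_format] s L']
  show "gg e z 0 \<le> -1/40" "gg e z 1 \<le> -1/40" "gg e z 2 \<le> -1/40" "gg e z 3 \<le> -1/40"
    "gg e z 4 + gg e z 5 + gg e z 6 \<le> -1/40"
    using k unfolding gg_def mv_vals inner_val by (simp_all add: algebra_simps)
qed

lemma Lf_nonneg: "z \<in> simplex7 \<Longrightarrow> 0 \<le> Lf z"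
  by (simp add: simplex_iff Lf_def)

lemma Lf_G: assumes "z \<in> simplex7" shows "Lf z \<le> 0 \<longleftrightarrow> z \<in> Gamma567"
proof -
  have nn: "\<forall>i. 0 \<le> z$i" and s: "z$0+z$1+z$2+z$3+z$4+z$5+z$6 = 1" using assms by (auto simp: simplex_iff)
  have P: "0 \<le> z$4 * z$5 * z$6" using nn by simp
  show ?thesis
  proof
    assume "Lf z \<le> 0"
    then have a: "z$0+z$1+z$2+z$3 + z$4 * z$5 * z$6 \<le> 0" by (simp add: Lf_def)
    have "z$0+z$1+z$2+z$3 = 0" using a P nn by (smt (verit))
    moreover have "z$4 * z$5 * z$6 = 0" using a P nn by (smt (verit))
    ultimately show "z \<in> Gamma567" using assms s unfolding Gamma567_def coord_vals by simp
  next
    assume "z \<in> Gamma567"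
    then have "z$4+z$5+z$6 = 1" "z$4 * z$5 * z$6 = 0" unfolding Gamma567_def coord_vals by auto
    then show "Lf z \<le> 0" using s unfolding Lf_def by linarith
  qed
qed

lemma cont_Lf: "continuous_on UNIV Lf"
  unfolding Lf_def by (intro continuous_intros)

lemma closed_simplex: "closed simplex7"
proof -
  have "simplex7 = (\<Inter>i. {z. 0 \<le> z$i}) \<inter> {z. (\<Sum>i\<in>UNIV. z$i) = 1}"
    unfolding simplex7_def by auto
  moreover have "closed (\<Inter>i. {z::real^7. 0 \<le> z$i})"
    by (intro closed_INT ballI closed_Collect_le continuous_intros)
  moreover have "closed {z::real^7. (\<Sum>i\<in>UNIV. z$i) = 1}"
    by (intro closed_Collect_eq continuous_intros)
  ultimately show ?thesis by (metis closed_Int)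
qed

lemma compact_simplex: "compact simplex7"
proof -
  have "bounded simplex7"
    unfolding bounded_iff
  proof (intro exI ballI)
    fix z assume z: "z \<in> simplex7"
    have "norm z \<le> (\<Sum>i\<in>UNIV. \<bar>z$i\<bar>)" by (rule norm_le_l1_cart)
    also have "\<dots> = (\<Sum>i\<in>UNIV. z$i)" using z by (simp add: simplex7_def)
    also have "\<dots> = 1" using z by (simp add: simplex7_def)
    finally show "norm z \<le> 1" .
  qed
  then show ?thesis using closed_simplex by (simp add: compact_eq_bounded_closed)
qed

lemma G_eq: "Gamma567 = simplex7 \<inter> {z. Lf z \<le> 0}"
  using Lf_G unfolding Gamma567_def by blast

lemma compact_G: "compact Gamma567"
proof -
  have "closed {z. Lf z \<le> 0}" by (intro closed_Collect_le cont_Lf continuous_intros)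
  then show ?thesis unfolding G_eq by (intro compact_Int_closed compact_simplex)
qed

lemma G_sub: "Gamma567 \<subseteq> simplex7" unfolding Gamma567_def by auto

lemma near:
  assumes "open V" "Gamma567 \<subseteq> V"
  shows "\<exists>d>0. \<forall>z\<in>simplex7. Lf z < d \<longrightarrow> z \<in> V"
proof (cases "simplex7 - V = {}")
  case True
  then show ?thesis by (intro exI[of _ 1]) auto
next
  case False
  have K: "compact (simplex7 - V)"
    using compact_simplex assms(1) by (simp add: Diff_eq compact_Int_closed closed_Compl)
  obtain z0 where z0: "z0 \<in> simplex7 - V" "\<forall>y\<in>simplex7 - V. Lf z0 \<le> Lf y"
    using continuous_attains_inf[OF K False continuous_on_subset[OF cont_Lf]] by auto
  have "z0 \<notin> Gamma567" using z0 assms by auto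
  then have pos: "Lf z0 > 0" using Lf_G[of z0] z0 by auto
  show ?thesis
  proof (intro exI[of _ "Lf z0"] conjI ballI impI pos)
    fix z assume "z \<in> simplex7" "Lf z < Lf z0"
    then show "z \<in> V" using z0 by force
  qed
qed


lemma sol_comp:
  assumes "is_solution F x" "t \<ge> 0"
  shows "((\<lambda>t. x t $ i) has_real_derivative (F (x t) $ i)) (at t within {0..})"
proof -
  have "(x has_vector_derivative F (x t)) (at t within {0..})"
    using assms unfolding is_solution_def by auto
  from bounded_linear.has_vector_derivative[OF bounded_linear_vec_nth this, of i]
  show ?thesis by (simp add: has_real_derivative_iff_has_vector_derivative)
qed

lemma sol_cont:
  assumes "is_solution F x"
  shows "continuous_on {0..} x"
  unfolding continuous_on_eq_continuous_within
proof
  fix t :: real assume "t \<in> {0..}"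
  then have "(x has_vector_derivative F (x t)) (at t within {0..})"
    using assms unfolding is_solution_def by auto
  then show "continuous (at t within {0..}) x" by (rule has_vector_derivative_continuous)
qed

lemma lin_ode:
  fixes f a :: "real \<Rightarrow> real"
  assumes a: "continuous_on {0..} a"
    and d: "\<And>t. t \<ge> 0 \<Longrightarrow> (f has_real_derivative a t * f t) (at t within {0..})"
    and t: "t \<ge> 0"
  shows "f t = f 0 * exp (integral {0..t} a)"
proof -
  define A where "A u = integral {0..u} a" for u
  have dA: "(A has_real_derivative a u) (at u within {0..t})" if "u \<in> {0..t}" for u
    unfolding A_def by (rule integral_has_real_derivative[OF continuous_on_subset[OF a] that]) auto
  have df: "(f has_real_derivative a u * f u) (at u within {0..t})" if "u \<in> {0..t}" for u
    using d[of u] that by (auto intro: DERIV_subset)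
  define h where "h u = f u * exp (- A u)" for u
  have dh: "(h has_real_derivative 0) (at u within {0..t})" if "u \<in> {0..t}" for u
  proof -
    have E: "((\<lambda>u. exp (- A u)) has_real_derivative exp (- A u) * (- a u)) (at u within {0..t})"
      by (rule DERIV_chain2[OF DERIV_exp DERIV_minus[OF dA[OF that]]])
    have "(h has_real_derivative (a u * f u) * exp (- A u) + (exp (- A u) * (- a u)) * f u) (at u within {0..t})"
      unfolding h_def by (rule DERIV_mult[OF df[OF that] E])
    moreover have "(a u * f u) * exp (- A u) + (exp (- A u) * (- a u)) * f u = 0" by (simp add: algebra_simps)
    ultimately show ?thesis by simp
  qed
  obtain c where c: "\<forall>u\<in>{0..t}. h u = c"
    using has_field_derivative_zero_constant[of "{0..t}" h] dh by auto
  then have "h t = h 0" using t by auto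
  moreover have "A 0 = 0" unfolding A_def by simp
  ultimately have "f t * exp (- A t) = f 0" unfolding h_def by simp
  then have "f t = f 0 * exp (A t)" by (simp add: exp_minus field_simps)
  then show ?thesis unfolding A_def .
qed

lemma first_hit:
  fixes M M' :: "real \<Rightarrow> real"
  assumes cont: "continuous_on {0..} M"
    and deriv: "\<And>t. t \<ge> 0 \<Longrightarrow> (M has_real_derivative M' t) (at t within {0..})"
    and neg: "\<And>t. t \<ge> 0 \<Longrightarrow> M t < d \<Longrightarrow> M' t \<le> 0"
    and M0: "M 0 < d" and t: "t \<ge> 0"
  shows "M t \<le> M 0"
proof (rule ccontr)
  assume "\<not> M t \<le> M 0"
  then have gt: "M t > M 0" by simp
  define b where "b = min (M t) ((M 0 + d) / 2)"
  have hh: "(M 0 + d)/2 < d" "M 0 < (M 0 + d)/2" using M0 by auto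
  have b: "M 0 < b" "b < d" "b \<le> M t" using gt hh unfolding b_def by (auto simp: min_def)
  define A where "A = {s \<in> {0..t}. b \<le> M s}"
  have clA: "closed A" unfolding A_def
    by (intro continuous_on_closed_Collect_le continuous_on_const continuous_on_subset[OF cont]) auto
  have tA: "t \<in> A" using t b unfolding A_def by auto
  then have neA: "A \<noteq> {}" by auto
  have bdA: "bdd_below A" unfolding A_def by (rule bdd_belowI[of _ 0]) auto
  define tau where "tau = Inf A"
  have tauA: "tau \<in> A" unfolding tau_def by (rule closed_contains_Inf[OF neA bdA clA])
  then have tau: "0 \<le> tau" "tau \<le> t" "b \<le> M tau" unfolding A_def by auto
  have before: "M s < b" if "0 \<le> s" "s < tau" for s
  proof (rule ccontr)
    assume "\<not> M s < b"
    then have "s \<in> A" using that tau unfolding A_def by auto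
    then have "tau \<le> s" unfolding tau_def using bdA by (rule cInf_lower)
    then show False using that by simp
  qed
  have tau_pos: "0 < tau"
  proof (rule ccontr)
    assume "\<not> 0 < tau"
    then have "tau = 0" using tau by simp
    then show False using tau b by simp
  qed
  have "\<exists>xi\<in>{0<..<tau}. M tau - M 0 = (\<lambda>h. M' xi * h) (tau - 0)"
  proof (rule mvt_simple[OF tau_pos])
    fix u assume "0 \<le> u" "u \<le> tau"
    then have "(M has_real_derivative M' u) (at u within {0..tau})"
      using deriv[of u] by (auto intro: DERIV_subset)
    then show "(M has_derivative (\<lambda>h. M' u * h)) (at u within {0..tau})"
      by (simp add: has_field_derivative_def)
  qed
  then obtain xi where xi: "0 < xi" "xi < tau" "M tau - M 0 = M' xi * tau" by auto
  have "M xi < d" using before[of xi] xi b by simp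
  then have "M' xi \<le> 0" using neg[of xi] xi by simp
  then have "M tau - M 0 \<le> 0" using xi tau_pos by (simp add: mult_nonpos_nonneg)
  then show False using tau b by simp
qed


lemma deriv_cont_on:
  assumes "\<And>t. t \<ge> 0 \<Longrightarrow> ((M::real\<Rightarrow>real) has_real_derivative M' t) (at t within {0..})"
  shows "continuous_on {0..} M"
  unfolding continuous_on_eq_continuous_within using assms by (auto intro: DERIV_continuous)

lemma sol_dc:
  assumes sol: "is_solution (replicator (Umat e)) x" and t: "t \<ge> 0"
  shows "((\<lambda>t. x t $ i) has_real_derivative ((Umat e *v x t)$i - x t \<bullet> (Umat e *v x t)) * x t $ i) (at t within {0..})"
  using sol_comp[OF sol t, of i] by (simp add: replicator_def mult.commute)

lemma traj_simplex:
  fixes e :: real and x :: "real \<Rightarrow> real^7"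
  assumes sol: "is_solution (replicator (Umat e)) x" and x0: "x 0 \<in> simplex7" and t: "t \<ge> 0"
  shows "x t \<in> simplex7"
proof -
  have xc: "continuous_on {0..} x" by (rule sol_cont[OF sol])
  define W where "W t = x t \<bullet> (Umat e *v x t)" for t
  have Uxc: "continuous_on {0..} (\<lambda>t. Umat e *v x t)"
    by (rule linear_continuous_on_compose[OF xc matrix_vector_mul_linear])
  have Wc: "continuous_on {0..} W" unfolding W_def by (intro continuous_intros xc Uxc)
  have nn: "0 \<le> x t $ i" for i
  proof -
    have "x t $ i = x 0 $ i * exp (integral {0..t} (\<lambda>t. (Umat e *v x t)$i - W t))"
    proof (rule lin_ode[where f="\<lambda>t. x t $ i" and a="\<lambda>t. (Umat e *v x t)$i - W t", OF _ _ t])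
      show "continuous_on {0..} (\<lambda>t. (Umat e *v x t)$i - W t)" by (intro continuous_intros Uxc Wc)
      show "((\<lambda>t. x t $ i) has_real_derivative ((Umat e *v x t)$i - W t) * x t $ i) (at t within {0..})"
        if "t \<ge> 0" for t
        using sol_dc[OF sol that, of i] unfolding W_def .
    qed
    moreover have "0 \<le> x 0 $ i" using x0 by (simp add: simplex7_def)
    ultimately show ?thesis by simp
  qed
  have "(\<Sum>i\<in>UNIV. x t $ i) - 1 = ((\<Sum>i\<in>UNIV. x 0 $ i) - 1) * exp (integral {0..t} (\<lambda>t. - W t))"
  proof (rule lin_ode[where f="\<lambda>t. (\<Sum>i\<in>UNIV. x t $ i) - 1" and a="\<lambda>t. - W t", OF _ _ t])
    show "continuous_on {0..} (\<lambda>t. - W t)" by (intro continuous_intros Wc)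
    show "((\<lambda>t. (\<Sum>i\<in>UNIV. x t $ i) - 1) has_real_derivative - W t * ((\<Sum>i\<in>UNIV. x t $ i) - 1)) (at t within {0..})"
      if "t \<ge> 0" for t
    proof -
      have "((\<lambda>t. (\<Sum>i\<in>UNIV. x t $ i) - 1) has_real_derivative
          (\<Sum>i\<in>UNIV. ((Umat e *v x t)$i - W t) * x t $ i) - 0) (at t within {0..})"
        by (intro DERIV_diff DERIV_sum DERIV_const) (use sol_dc[OF sol that] W_def in simp)
      moreover have "(\<Sum>i\<in>UNIV. ((Umat e *v x t)$i - W t) * x t $ i) - 0 = - W t * ((\<Sum>i\<in>UNIV. x t $ i) - 1)"
      proof -
        have "(\<Sum>i\<in>UNIV. ((Umat e *v x t)$i - W t) * x t $ i) = (\<Sum>i\<in>UNIV. (Umat e *v x t)$i * x t $ i) - W t * (\<Sum>i\<in>UNIV. x t $ i)"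
          by (simp add: left_diff_distrib sum_subtractf sum_distrib_left)
        moreover have "(\<Sum>i\<in>UNIV. (Umat e *v x t)$i * x t $ i) = W t"
          by (simp add: W_def inner_vec_def mult.commute)
        ultimately show ?thesis by (simp add: algebra_simps)
      qed
      ultimately show ?thesis by simp
    qed
  qed
  moreover have "(\<Sum>i\<in>UNIV. x 0 $ i) = 1" using x0 by (simp add: simplex7_def)
  ultimately have "(\<Sum>i\<in>UNIV. x t $ i) = 1" by simp
  then show ?thesis using nn by (simp add: simplex7_def)
qed


lemma traj_L:
  fixes e :: real and x :: "real \<Rightarrow> real^7"
  assumes e: "0 < e" "e < 1/100"
    and sol: "is_solution (replicator (Umat e)) x" and x0: "x 0 \<in> simplex7"
    and L0: "Lf (x 0) < 1/1000000" and t: "t \<ge> 0"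
  shows "Lf (x t) \<le> Lf (x 0) * exp (- t / 40)"
proof -
  define c where "c k s = x s $ k" for k s
  define g where "g k s = gg e (x s) k" for k s
  have dc: "(c k has_real_derivative g k s * c k s) (at s within {0..})" if "s \<ge> 0" for k s
    using sol_dc[OF sol that, of k] unfolding c_def g_def gg_def .
  define DL where "DL s = g 0 s * c 0 s + g 1 s * c 1 s + g 2 s * c 2 s + g 3 s * c 3 s
      + ((g 4 s * c 4 s * c 5 s + g 5 s * c 5 s * c 4 s) * c 6 s + g 6 s * c 6 s * (c 4 s * c 5 s))" for s
  have dL: "((\<lambda>s. Lf (x s)) has_real_derivative DL s) (at s within {0..})" if "s \<ge> 0" for s
  proof -
    have "((\<lambda>s. c 0 s + c 1 s + c 2 s + c 3 s + c 4 s * c 5 s * c 6 s) has_real_derivative DL s) (at s within {0..})"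
      unfolding DL_def by (intro DERIV_add DERIV_mult dc that)
    then show ?thesis unfolding Lf_def c_def .
  qed
  define M where "M s = Lf (x s) * exp (s / 40)" for s
  define M' where "M' s = DL s * exp (s / 40) + exp (s / 40) * (1 / 40) * Lf (x s)" for s
  have dM: "(M has_real_derivative M' s) (at s within {0..})" if "s \<ge> 0" for s
  proof -
    have d40: "((\<lambda>s. s / 40) has_real_derivative 1 / 40) (at s within {0..})"
      by (auto intro!: derivative_eq_intros)
    have "((\<lambda>s. exp (s / 40)) has_real_derivative exp (s / 40) * (1 / 40)) (at s within {0..})"
      by (rule DERIV_chain2[OF DERIV_exp d40])
    from DERIV_mult[OF dL[OF that] this] show ?thesis unfolding M_def M'_def .
  qed
  have neg: "M' s \<le> 0" if s: "s \<ge> 0" and Ms: "M s < 1/1000000" for s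
  proof -
    have xs: "x s \<in> simplex7" by (rule traj_simplex[OF sol x0 s])
    have nn: "0 \<le> c k s" for k using xs unfolding c_def simplex7_def by auto
    have Lnn: "0 \<le> Lf (x s)" by (rule Lf_nonneg[OF xs])
    have "exp (s/40) \<ge> 1" using s by simp
    then have "Lf (x s) \<le> M s" unfolding M_def using Lnn by (metis mult_left_mono mult.right_neutral)
    then have Ls: "Lf (x s) < 1/1000000" using Ms by simp
    note k = keyv[OF e xs Ls]
    have b0: "g 0 s * c 0 s \<le> -1/40 * c 0 s" using k(1) nn[of 0] unfolding g_def by (rule mult_right_mono)
    have b1: "g 1 s * c 1 s \<le> -1/40 * c 1 s" using k(2) nn[of 1] unfolding g_def by (rule mult_right_mono)
    have b2: "g 2 s * c 2 s \<le> -1/40 * c 2 s" using k(3) nn[of 2] unfolding g_def by (rule mult_right_mono)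
    have b3: "g 3 s * c 3 s \<le> -1/40 * c 3 s" using k(4) nn[of 3] unfolding g_def by (rule mult_right_mono)
    have P0: "0 \<le> c 4 s * c 5 s * c 6 s" using nn by simp
    have b4: "(g 4 s + g 5 s + g 6 s) * (c 4 s * c 5 s * c 6 s) \<le> -1/40 * (c 4 s * c 5 s * c 6 s)"
      using k(5) P0 unfolding g_def by (rule mult_right_mono)
    have eqDL: "DL s = g 0 s * c 0 s + g 1 s * c 1 s + g 2 s * c 2 s + g 3 s * c 3 s
       + (g 4 s + g 5 s + g 6 s) * (c 4 s * c 5 s * c 6 s)"
      unfolding DL_def by (simp add: algebra_simps)
    have LL: "Lf (x s) = c 0 s + c 1 s + c 2 s + c 3 s + c 4 s * c 5 s * c 6 s"
      unfolding Lf_def c_def ..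
    have "DL s + 1/40 * Lf (x s) \<le> 0" using eqDL LL b0 b1 b2 b3 b4 by linarith
    then have "exp (s/40) * (DL s + 1/40 * Lf (x s)) \<le> 0"
      by (simp add: mult_nonneg_nonpos)
    then show ?thesis unfolding M'_def by (simp add: algebra_simps)
  qed
  have "M t \<le> M 0"
  proof (rule first_hit[OF deriv_cont_on[OF dM] dM neg _ t])
    show "M 0 < 1/1000000" using L0 unfolding M_def by simp
  qed
  then have "Lf (x t) * exp (t/40) \<le> Lf (x 0)" unfolding M_def by simp
  then show ?thesis by (simp add: exp_minus field_simps)
qed


theorem proposition8:
  shows "\<exists>e0>0. \<forall>e. 0 < e \<and> e < e0 \<longrightarrow>
           asymptotically_stable (replicator (Umat e)) simplex7 Gamma567"
proof (intro exI[of _ "1/100"] conjI allI impI)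
  show "(0::real) < 1/100" by simp
  fix e :: real assume "0 < e \<and> e < 1/100"
  then have e: "0 < e" "e < 1/100" by auto
  have Lb: "x t \<in> simplex7 \<and> Lf (x t) \<le> Lf (x 0)"
    if sol: "is_solution (replicator (Umat e)) x" and x0: "x 0 \<in> simplex7"
      and L0: "Lf (x 0) < 1/1000000" and t: "t \<ge> 0" for x t
  proof
    show "x t \<in> simplex7" by (rule traj_simplex[OF sol x0 t])
    have "Lf (x t) \<le> Lf (x 0) * exp (- t / 40)" by (rule traj_L[OF e sol x0 L0 t])
    moreover have "Lf (x 0) * exp (- t / 40) \<le> Lf (x 0) * 1"
      using Lf_nonneg[OF x0] t by (intro mult_left_mono) auto
    ultimately show "Lf (x t) \<le> Lf (x 0)" by simp
  qed
  have Wopen: "open {z. Lf z < d}" for d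
    by (rule open_Collect_less[OF cont_Lf continuous_on_const])
  have GW: "Gamma567 \<subseteq> {z. Lf z < d}" if "d > 0" for d
    using Lf_G G_sub that by fastforce
  show "asymptotically_stable (replicator (Umat e)) simplex7 Gamma567"
    unfolding asymptotically_stable_def
  proof (intro conjI)
    show "compact Gamma567" by (rule compact_G)
    show "Gamma567 \<subseteq> simplex7" by (rule G_sub)
    show "\<forall>x. is_solution (replicator (Umat e)) x \<and> x 0 \<in> Gamma567 \<longrightarrow> (\<forall>t\<ge>0. x t \<in> Gamma567)"
    proof (intro allI impI)
      fix x t assume a: "is_solution (replicator (Umat e)) x \<and> x 0 \<in> Gamma567" and t: "(t::real) \<ge> 0"
      have x0: "x 0 \<in> simplex7" using a G_sub by auto
      have L0: "Lf (x 0) \<le> 0" using a Lf_G[OF x0] by auto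
      then have "x t \<in> simplex7 \<and> Lf (x t) \<le> Lf (x 0)" using Lb[of x t] a x0 t by auto
      then show "x t \<in> Gamma567" using Lf_G[of "x t"] L0 by auto
    qed
    show "\<forall>V. open V \<and> Gamma567 \<subseteq> V \<longrightarrow>
        (\<exists>W. open W \<and> Gamma567 \<subseteq> W \<and>
           (\<forall>x. is_solution (replicator (Umat e)) x \<and> x 0 \<in> W \<inter> simplex7 \<longrightarrow> (\<forall>t\<ge>0. x t \<in> V)))"
    proof (intro allI impI)
      fix V assume V: "open V \<and> Gamma567 \<subseteq> V"
      obtain d where d: "d > 0" "\<forall>z\<in>simplex7. Lf z < d \<longrightarrow> z \<in> V" using near V by blast
      define d' where "d' = min d (1/1000000)"
      have d': "d' > 0" "d' \<le> d" "d' \<le> 1/1000000" using d unfolding d'_def by auto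
      show "\<exists>W. open W \<and> Gamma567 \<subseteq> W \<and>
           (\<forall>x. is_solution (replicator (Umat e)) x \<and> x 0 \<in> W \<inter> simplex7 \<longrightarrow> (\<forall>t\<ge>0. x t \<in> V))"
      proof (intro exI[of _ "{z. Lf z < d'}"] conjI allI impI Wopen GW d')
        fix x t assume a: "is_solution (replicator (Umat e)) x \<and> x 0 \<in> {z. Lf z < d'} \<inter> simplex7"
          and t: "(t::real) \<ge> 0"
        then have "x t \<in> simplex7 \<and> Lf (x t) \<le> Lf (x 0)" using Lb[of x t] d' by auto
        moreover have "Lf (x 0) < d" using a d' by auto
        ultimately show "x t \<in> V" using d by auto
      qed
    qed
    show "\<exists>W. open W \<and> Gamma567 \<subseteq> W \<and>
        (\<forall>x. is_solution (replicator (Umat e)) x \<and> x 0 \<in> W \<inter> simplex7 \<longrightarrow>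
           ((\<lambda>t. infdist (x t) Gamma567) \<longlongrightarrow> 0) at_top)"
    proof (intro exI[of _ "{z. Lf z < 1/1000000}"] conjI allI impI Wopen GW)
      show "(0::real) < 1/1000000" by simp
      fix x assume a: "is_solution (replicator (Umat e)) x \<and> x 0 \<in> {z. Lf z < 1/1000000} \<inter> simplex7"
      then have sol: "is_solution (replicator (Umat e)) x" and x0: "x 0 \<in> simplex7"
        and L0: "Lf (x 0) < 1/1000000" by auto
      have lim: "((\<lambda>t. Lf (x 0) * exp (- t / 40)) \<longlongrightarrow> 0) at_top" by real_asymp
      show "((\<lambda>t. infdist (x t) Gamma567) \<longlongrightarrow> 0) at_top"
      proof (rule order_tendstoI)
        fix a :: real assume "a < 0"
        then show "\<forall>\<^sub>F t in at_top. a < infdist (x t) Gamma567"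
        proof (intro always_eventually allI)
          fix t show "a < infdist (x t) Gamma567"
            using infdist_nonneg[of "x t" Gamma567] \<open>a < 0\<close> by linarith
        qed
      next
        fix a :: real assume apos: "0 < a"
        have oV: "open {z. infdist z Gamma567 < a}"
          by (intro open_Collect_less continuous_intros)
        have GV: "Gamma567 \<subseteq> {z. infdist z Gamma567 < a}" using apos by auto
        obtain d where d: "d > 0" "\<forall>z\<in>simplex7. Lf z < d \<longrightarrow> z \<in> {z. infdist z Gamma567 < a}"
          using near[OF oV GV] by blast
        have ev: "\<forall>\<^sub>F t in at_top. Lf (x 0) * exp (- t / 40) < d" using order_tendstoD(2)[OF lim d(1)] .
        show "\<forall>\<^sub>F t in at_top. infdist (x t) Gamma567 < a"
          using ev eventually_ge_at_top[of "0::real"]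
        proof eventually_elim
          case (elim t)
          have "x t \<in> simplex7" by (rule traj_simplex[OF sol x0 elim(2)])
          moreover have "Lf (x t) < d" using traj_L[OF e sol x0 L0 elim(2)] elim(1) by simp
          ultimately show ?case using d by auto
        qed
      qed
    qed
  qed
qed

end
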